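(* Let $n \in \mathbb{N}$ and $m \in \mathbb{Z}$ with $0 \le m \le n-1$. Then there exists a constant $C_{n,m} > 0$ with the following property: for every $k \in \mathbb{N}$ and every function $F \colon \mathcal{K}_k^n \to \mathbb{Z}^{n-1}$ such that $\|F(K_1) - F(K_2)\|_\infty \le 1$ for all $K_1, K_2 \in \mathcal{K}_k^n$ with $\dim(K_1 \cap K_2) \ge m$, there exist a $1$-connected subset $P \subset \mathbb{Z}^{n-1}$ with $|P| \le C_{n,m}$ and a subfamily $\mathcal{S} \subset F^{-1}[P]$ such that $\bigcup \mathcal{S}$ connects some opposite faces of $I^n$.
   Context: $I^n = [0,1]^n$. For $n,k \in \mathbb{N}$, $\mathcal{K}_k^n = \{\prod_{s=1}^n [\frac{i_s-1}{k}, \frac{i_s}{k}] : i_s \in \{1,\dots,k\}\}$ is the division of $I^n$ into $k^n$ closed cubes. $\dim$ denotes topological dimension (so for two cubes of $\mathcal{K}_k^n$, $\dim(K_1\cap K_2)\ge 0$ means $K_1 \cap K_2 \neq \emptyset$, and $\dim(K_1 \cap K_2)$ is the dimension of their common face). For $i \in \{1,\dots,n\}$ the $i$th opposite faces of $I^n$ are $I^n_{i,-} = \{z \in I^n : z_i = 0\}$ and $I^n_{i,+} = \{z \in I^n : z_i = 1\}$. A set $S \subset I^n$ connects the $i$th opposite faces of $I^n$ if $S$ is connected and $S \cap I^n_{i,-} \ne \emptyset \ne S \cap I^n_{i,+}$; it connects some opposite faces if this holds for some $i$. $\mathbb{Z}^0 = \{0\}$, and $\mathbb{Z}^{n-1}$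 carries the $\ell^\infty$ norm. For $r>0$, a set $P$ in a metric space is $r$-connected if any two of its points $x,y$ can be joined by a finite sequence $x=p_1,\dots,p_N=y$ of points of $P$ with consecutive distances at most $r$. For $P \subset \mathbb{Z}^{n-1}$, $F^{-1}[P]$ denotes the preimage, a subfamily of $\mathcal{K}_k^n$. *)

theory Defs
  imports "HOL-Analysis.Analysis"
begin

definition unit_cube :: "(real^'n) set" where
  "unit_cube = {x. \<forall>s. 0 \<le> x$s \<and> x$s \<le> 1}"

definition grid_cube :: "nat \<Rightarrow> ('n \<Rightarrow> nat) \<Rightarrow> (real^'n) set" where
  "grid_cube k i = {x. \<forall>s. (real (i s) - 1) / real k \<le> x$s \<and> x$s \<le> real (i s) / real k}"

definition grid_cubes :: "nat \<Rightarrow> (real^'n) set set" where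
  "grid_cubes k = {grid_cube k i | i. \<forall>s. 1 \<le> i s \<and> i s \<le> k}"

definition face_minus :: "'n \<Rightarrow> (real^'n) set" where
  "face_minus i = {z \<in> unit_cube. z$i = 0}"
definition face_plus :: "'n \<Rightarrow> (real^'n) set" where
  "face_plus i = {z \<in> unit_cube. z$i = 1}"

definition connects_opposite_faces :: "(real^'n) set \<Rightarrow> bool" where
  "connects_opposite_faces S \<longleftrightarrow>
     (\<exists>i. connected S \<and> S \<inter> face_minus i \<noteq> {} \<and> S \<inter> face_plus i \<noteq> {})"

text \<open>Z^d represented as integer sequences vanishing from index d on.\<close>
definition Zvec :: "nat \<Rightarrow> (nat \<Rightarrow> int) set" where
  "Zvec d = {a. \<forall>j\<ge>d. a j = 0}"

text \<open>l-infinity distance on Z^d (Z^0 = {0} has distance 0).\<close>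
definition linf_dist :: "nat \<Rightarrow> (nat \<Rightarrow> int) \<Rightarrow> (nat \<Rightarrow> int) \<Rightarrow> int" where
  "linf_dist d a b = Max ({\<bar>a j - b j\<bar> | j. j < d} \<union> {0})"

definition r_connected :: "('a \<Rightarrow> 'a \<Rightarrow> 'b::linorder) \<Rightarrow> 'b \<Rightarrow> 'a set \<Rightarrow> bool" where
  "r_connected dist_fn r P \<longleftrightarrow>
     (\<forall>x\<in>P. \<forall>y\<in>P. \<exists>ps. ps \<noteq> [] \<and> hd ps = x \<and> last ps = y \<and> set ps \<subseteq> P \<and>
        (\<forall>j. Suc j < length ps \<longrightarrow> dist_fn (ps ! j) (ps ! Suc j) \<le> r))"

end

theory Submission
  imports Defs
begin

lemma unit_cube_cbox: "(unit_cube :: (real^'n) set) = cbox 0 1"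
  by (auto simp: unit_cube_def mem_box_cart)

lemma PM:
  fixes f :: "real^'n \<Rightarrow> real^'n"
  assumes cont: "continuous_on unit_cube f"
    and lo: "\<And>x s. x \<in> unit_cube \<Longrightarrow> x$s = 0 \<Longrightarrow> f x $ s \<le> 0"
    and hi: "\<And>x s. x \<in> unit_cube \<Longrightarrow> x$s = 1 \<Longrightarrow> f x $ s \<ge> 0"
  shows "\<exists>x\<in>unit_cube. f x = 0"
proof -
  define g where "g x = (\<chi> s. max 0 (min 1 (x$s - f x $ s)))" for x :: "real^'n"
  have cg: "continuous_on unit_cube g"
    unfolding g_def
    by (intro continuous_on_vec_lambda continuous_intros continuous_on_component cont continuous_on_id)
  have gS: "g \<in> unit_cube \<rightarrow> unit_cube"
    by (auto simp: g_def unit_cube_def)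
  obtain x where x: "x \<in> unit_cube" "g x = x"
  proof -
    have ne: "cbox (0::real^'n) 1 \<noteq> {}" using mem_box_cart(2)[of 0 0 1] by auto
    show ?thesis using brouwer[of "cbox 0 1" g, OF compact_cbox convex_box(1) ne] cg gS that
      unfolding unit_cube_cbox by auto
  qed
  have "f x $ s = 0" for s
  proof -
    have e: "max 0 (min 1 (x$s - f x $ s)) = x$s"
      using x(2) by (metis (no_types, lifting) g_def vec_lambda_beta)
    have r: "0 \<le> x$s" "x$s \<le> 1" using x(1) by (auto simp: unit_cube_def)
    show ?thesis
    proof (cases "x$s = 0")
      case True then show ?thesis using lo[OF x(1) True] e by linarith
    next
      case False
      show ?thesis
      proof (cases "x$s = 1")
        case True then show ?thesis using hi[OF x(1) True] e by linarith
      next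
        case False
        then show ?thesis using \<open>x$s \<noteq> 0\<close> e r by linarith
      qed
    qed
  qed
  then show ?thesis using x(1) by (metis vec_eq_iff zero_index)
qed

definition Idx :: "nat \<Rightarrow> ('n::finite \<Rightarrow> nat) set" where
  "Idx k = {i. \<forall>s. 1 \<le> i s \<and> i s \<le> k}"

definition Rel :: "nat \<Rightarrow> (('n::finite \<Rightarrow> nat) \<Rightarrow> 'n) \<Rightarrow> 'n \<Rightarrow> (('n \<Rightarrow> nat) \<times> ('n \<Rightarrow> nat)) set" where
  "Rel k col c = {(i,j). i \<in> Idx k \<and> j \<in> Idx k \<and> col i = c \<and> col j = c \<and>
      (grid_cube k i :: (real^'n) set) \<inter> grid_cube k j \<noteq> {}}"

lemma finite_Idx: "finite (Idx k :: ('n::finite \<Rightarrow> nat) set)"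
proof -
  have "Idx k \<subseteq> PiE UNIV (\<lambda>_::'n. {1..k})" by (auto simp: Idx_def)
  then show ?thesis using finite_PiE[of UNIV "\<lambda>_::'n. {1..k}"] finite_subset by auto
qed

lemma grid_cube_cbox: "(grid_cube k i :: (real^'n) set) =
   cbox (\<chi> s. (real (i s) - 1) / real k) (\<chi> s. real (i s) / real k)"
  by (auto simp: grid_cube_def mem_box_cart)

lemma closed_grid_cube: "closed (grid_cube k i :: (real^'n) set)"
  by (simp add: grid_cube_cbox closed_cbox)

lemma closed_unit_cube: "closed (unit_cube :: (real^'n) set)"
  by (simp add: unit_cube_cbox closed_cbox)

lemma closed_face_minus: "closed (face_minus c :: (real^'n) set)"
proof -
  have "face_minus c = unit_cube \<inter> {x::real^'n. x$c = 0}" by (auto simp: face_minus_def)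
  moreover have "closed {x::real^'n. x$c = 0}"
    by (intro closed_Collect_eq continuous_intros continuous_on_component continuous_on_id)
  ultimately show ?thesis using closed_unit_cube closed_Int by metis
qed

lemma closed_face_plus: "closed (face_plus c :: (real^'n) set)"
proof -
  have "face_plus c = unit_cube \<inter> {x::real^'n. x$c = 1}" by (auto simp: face_plus_def)
  moreover have "closed {x::real^'n. x$c = 1}"
    by (intro closed_Collect_eq continuous_intros continuous_on_component continuous_on_id)
  ultimately show ?thesis using closed_unit_cube closed_Int by metis
qed

lemma face_minus_ne: "face_minus c \<noteq> ({} :: (real^'n) set)"
proof -
  have "(0::real^'n) \<in> face_minus c" by (auto simp: face_minus_def unit_cube_def)
  then show ?thesis by auto
qed

lemma face_plus_ne: "face_plus c \<noteq> ({} :: (real^'n) set)"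
proof -
  have "(1::real^'n) \<in> face_plus c" by (auto simp: face_plus_def unit_cube_def)
  then show ?thesis by auto
qed

lemma cover:
  assumes "k \<ge> 1" "(x::real^'n) \<in> unit_cube"
  shows "\<exists>i\<in>Idx k. x \<in> grid_cube k i"
proof -
  define i where "i s = nat (max 1 \<lceil>x$s * real k\<rceil>)" for s
  have "i \<in> Idx k \<and> x \<in> grid_cube k i"
    unfolding Idx_def grid_cube_def mem_Collect_eq
  proof (intro conjI allI)
    fix s
    have r: "0 \<le> x$s" "x$s \<le> 1" using assms(2) by (auto simp: unit_cube_def)
    have kp: "real k \<ge> 1" using assms(1) by simp
    have c1: "\<lceil>x$s * real k\<rceil> \<le> int k"
      using r kp by (metis ceiling_le_iff mult_le_cancel_right1 mult.commute of_int_of_nat_eq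
          mult_right_le_one_le order.trans le_numeral_extra(1) linorder_not_le less_imp_le mult_left_le)
    have ce: "x$s * real k \<le> \<lceil>x$s * real k\<rceil>" "\<lceil>x$s * real k\<rceil> < x$s * real k + 1"
      by linarith+
    show "1 \<le> i s" by (simp add: i_def)
    show "i s \<le> k" using c1 assms(1) by (simp add: i_def nat_le_iff)
    show "(real (i s) - 1) / real k \<le> x $ s"
    proof (cases "\<lceil>x$s * real k\<rceil> \<le> 1")
      case True then have "i s = 1" by (simp add: i_def)
      then show ?thesis using r by simp
    next
      case False then have "real (i s) = \<lceil>x$s * real k\<rceil>" by (simp add: i_def)
      then have "real (i s) - 1 \<le> x$s * real k" using ce by linarith
      then show ?thesis using kp by (simp add: divide_le_eq)
    qed
    show "x $ s \<le> real (i s) / real k"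
    proof -
      have "x$s * real k \<le> real (i s)" using ce by (simp add: i_def) linarith
      then show ?thesis using kp by (simp add: le_divide_eq)
    qed
  qed
  then show ?thesis by blast
qed

lemma rtrancl_Rel:
  assumes "(i0, i) \<in> (Rel k col c)\<^sup>*" "i0 \<in> Idx k" "col i0 = c"
  shows "i \<in> Idx k \<and> col i = c"
  using assms by (induction rule: rtrancl_induct) (auto simp: Rel_def)

lemma hex:
  fixes col :: "('n::finite \<Rightarrow> nat) \<Rightarrow> 'n"
  assumes k: "k \<ge> 1"
  shows "\<exists>c i0 i. i0 \<in> Idx k \<and> col i0 = c \<and> (grid_cube k i0 :: (real^'n) set) \<inter> face_minus c \<noteq> {}
     \<and> (i0, i) \<in> (Rel k col c)\<^sup>* \<and> (grid_cube k i :: (real^'n) set) \<inter> face_plus c \<noteq> {}"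
proof (rule ccontr)
  assume neg: "\<not> ?thesis"
  define Reach where "Reach c = {i. \<exists>i0. i0 \<in> Idx k \<and> col i0 = c \<and> (grid_cube k i0 :: (real^'n) set) \<inter> face_minus c \<noteq> {}
     \<and> (i0, i) \<in> (Rel k col c)\<^sup>*}" for c
  define Rst where "Rst c = {i \<in> Idx k. col i = c \<and> i \<notin> Reach c}" for c
  define X where "X c = \<Union>((grid_cube k :: _ \<Rightarrow> (real^'n) set) ` Reach c) \<union> face_minus c" for c
  define Y where "Y c = \<Union>((grid_cube k :: _ \<Rightarrow> (real^'n) set) ` Rst c) \<union> face_plus c" for c
  have ReachI: "Reach c \<subseteq> Idx k \<and> (\<forall>i\<in>Reach c. col i = c)" for c
    unfolding Reach_def using rtrancl_Rel[of _ _ k col c] by auto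
  have noplus: "i \<in> Reach c \<Longrightarrow> (grid_cube k i :: (real^'n) set) \<inter> face_plus c = {}" for i c
    using neg unfolding Reach_def by auto
  have clX: "closed (X c)" for c
  proof -
    have "finite (Reach c)" using ReachI finite_Idx finite_subset by metis
    then show ?thesis unfolding X_def
      by (intro closed_Un closed_Union closed_face_minus) (auto simp: closed_grid_cube)
  qed
  have clY: "closed (Y c)" for c
  proof -
    have "finite (Rst c)" by (rule finite_subset[OF _ finite_Idx]) (auto simp: Rst_def)
    then show ?thesis unfolding Y_def
      by (intro closed_Un closed_Union closed_face_plus) (auto simp: closed_grid_cube)
  qed
  have neX: "X c \<noteq> {}" for c using face_minus_ne unfolding X_def by auto
  have neY: "Y c \<noteq> {}" for c using face_plus_ne unfolding Y_def by auto
  define f where "f x = (\<chi> c. infdist x (X c) - infdist x (Y c))" for x :: "real^'n"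
  have cf: "continuous_on unit_cube f" unfolding f_def
    by (intro continuous_on_vec_lambda continuous_intros continuous_on_id)
  have lo: "f x $ s \<le> 0" if "x \<in> unit_cube" "x$s = 0" for x s
  proof -
    have "x \<in> X s" using that unfolding X_def face_minus_def by auto
    then have "infdist x (X s) = 0" using clX neX in_closed_iff_infdist_zero by blast
    then show ?thesis by (simp add: f_def infdist_nonneg)
  qed
  have hi: "f x $ s \<ge> 0" if "x \<in> unit_cube" "x$s = 1" for x s
  proof -
    have "x \<in> Y s" using that unfolding Y_def face_plus_def by auto
    then have "infdist x (Y s) = 0" using clY neY in_closed_iff_infdist_zero by blast
    then show ?thesis by (simp add: f_def infdist_nonneg)
  qed
  obtain x where x: "x \<in> unit_cube" "f x = 0" using PM[OF cf lo hi] by blast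
  obtain i where i: "i \<in> Idx k" "x \<in> grid_cube k i" using cover[OF k x(1)] by blast
  define c where "c = col i"
  have fz: "infdist x (X c) = infdist x (Y c)"
  proof -
    have "f x $ c = 0" using x(2) by simp
    then show ?thesis by (simp add: f_def)
  qed
  show False
  proof (cases "i \<in> Reach c")
    case True
    have inX: "x \<in> X c" using True i unfolding X_def by blast
    have "x \<notin> Y c"
    proof
      assume "x \<in> Y c"
      then consider "x \<in> face_plus c" | j where "j \<in> Rst c" "x \<in> grid_cube k j" unfolding Y_def by blast
      then show False
      proof cases
        case 1 then show False using noplus[OF True] i by blast
      next
        case 2
        have "(i, j) \<in> Rel k col c" using 2 i True ReachI unfolding Rel_def Rst_def c_def by blast
        moreover obtain i0 where "i0 \<in> Idx k" "col i0 = c" "(grid_cube k i0 :: (real^'n) set) \<inter> face_minus c \<noteq> {}"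
          "(i0, i) \<in> (Rel k col c)\<^sup>*" using True unfolding Reach_def by blast
        ultimately have "(i0, j) \<in> (Rel k col c)\<^sup>*" by (meson rtrancl.rtrancl_into_rtrancl)
        then have "j \<in> Reach c" unfolding Reach_def using \<open>i0 \<in> Idx k\<close> \<open>col i0 = c\<close>
           \<open>(grid_cube k i0 :: (real^'n) set) \<inter> face_minus c \<noteq> {}\<close> by blast
        then show False using 2 unfolding Rst_def by auto
      qed
    qed
    then have "infdist x (Y c) > 0" using clY neY infdist_pos_not_in_closed by blast
    moreover have "infdist x (X c) = 0" using inX clX neX in_closed_iff_infdist_zero by blast
    ultimately show False using fz by simp
  next
    case False
    have inR: "i \<in> Rst c" using False i unfolding Rst_def c_def by blast
    have inY: "x \<in> Y c" using inR i unfolding Y_def by blast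
    have "x \<notin> X c"
    proof
      assume "x \<in> X c"
      then consider "x \<in> face_minus c" | j where "j \<in> Reach c" "x \<in> grid_cube k j" unfolding X_def by blast
      then show False
      proof cases
        case 1
        then have "i \<in> Reach c" unfolding Reach_def using i c_def by blast
        then show False using False by auto
      next
        case 2
        have "(j, i) \<in> Rel k col c" using 2 i ReachI unfolding Rel_def c_def by blast
        moreover obtain i0 where "i0 \<in> Idx k" "col i0 = c" "(grid_cube k i0 :: (real^'n) set) \<inter> face_minus c \<noteq> {}"
          "(i0, j) \<in> (Rel k col c)\<^sup>*" using 2 unfolding Reach_def by blast
        ultimately have "(i0, i) \<in> (Rel k col c)\<^sup>*" by (meson rtrancl.rtrancl_into_rtrancl)
        then have "i \<in> Reach c" unfolding Reach_def using \<open>i0 \<in> Idx k\<close> \<open>col i0 = c\<close>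
           \<open>(grid_cube k i0 :: (real^'n) set) \<inter> face_minus c \<noteq> {}\<close> by blast
        then show False using False by auto
      qed
    qed
    then have "infdist x (X c) > 0" using clX neX infdist_pos_not_in_closed by blast
    moreover have "infdist x (Y c) = 0" using inY clY neY in_closed_iff_infdist_zero by blast
    ultimately show False using fz by simp
  qed
qed

lemma div_stable:
  fixes v w M n :: int
  assumes "M > 0" "n \<ge> 1" "2*n \<le> (v + n) mod M" "\<bar>w - v\<bar> \<le> n" "2*n < M"
  shows "w div M = v div M"
proof -
  define q where "q = v div M"
  define a where "a = v mod M"
  have v: "v = q*M + a" by (simp add: q_def a_def)
  have a: "0 \<le> a" "a < M" using assms(1) by (auto simp: a_def)
  have e: "(v + n) mod M = (a + n) mod M" by (simp add: a_def mod_add_left_eq)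
  have "a + n < M"
  proof (rule ccontr)
    assume "\<not> a + n < M"
    then have "(a + n) mod M = (a + n - M) mod M"
      by (metis diff_add_cancel mod_add_self2)
    also have "\<dots> = a + n - M" using \<open>\<not> a + n < M\<close> a assms(2) assms(5)
      by (intro mod_pos_pos_trivial) auto
    finally show False using assms a e by linarith
  qed
  then have "(a + n) mod M = a + n" using a assms(2) by (intro mod_pos_pos_trivial) auto
  then have "a \<ge> n" using assms e by linarith
  then have b: "q*M \<le> w" "w < q*M + M" using v assms \<open>a + n < M\<close> by linarith+
  have "w div M = q"
  proof -
    have "w = q*M + (w - q*M)" by simp
    then have "w div M = q + (w - q*M) div M" using assms(1)
      by (metis add.commute div_mult_self3 less_irrefl)
    moreover have "(w - q*M) div M = 0" using b by (intro div_pos_pos_trivial) auto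
    ultimately show ?thesis by simp
  qed
  then show ?thesis unfolding q_def .
qed

lemma two_bad:
  fixes v :: int and p q n :: nat
  assumes "p < q" "q < n" "(v - int p * (2*int n+1)) mod (int n * (2*int n+1)) < 2*int n"
    "(v - int q * (2*int n+1)) mod (int n * (2*int n+1)) < 2*int n"
  shows False
proof -
  define L where "L = 2*int n+1"
  define M where "M = int n * L"
  have Mp: "M > 0" using assms by (simp add: M_def L_def)
  define r1 where "r1 = (v - int p * L) mod M"
  define r2 where "r2 = (v - int q * L) mod M"
  define t1 where "t1 = (v - int p * L) div M"
  define t2 where "t2 = (v - int q * L) div M"
  have e1: "v - int p * L = t1 * M + r1" by (simp add: r1_def t1_def)
  have e2: "v - int q * L = t2 * M + r2" by (simp add: r2_def t2_def)
  have r: "0 \<le> r1" "r1 < 2*int n" "0 \<le> r2" "r2 < 2*int n"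
    using assms Mp by (auto simp: r1_def r2_def L_def M_def)
  have k: "(int q - int p) * L - r1 + r2 = (t1 - t2) * M"
    using e1 e2 by (simp add: algebra_simps)
  have g1: "(int q - int p) * L \<ge> L" using assms by (simp add: L_def)
  have g2: "(int q - int p) * L \<le> (int n - 1) * L" using assms by (intro mult_right_mono) (auto simp: L_def)
  have pos: "(t1 - t2) * M > 0" using k g1 r unfolding L_def by linarith
  have "(int n - 1) * L = M - L" by (simp add: M_def algebra_simps)
  then have lt: "(t1 - t2) * M < M" using k g2 r unfolding L_def by linarith
  from pos Mp have "t1 - t2 > 0" by (simp add: zero_less_mult_iff)
  then have "(t1 - t2) * M \<ge> M" using Mp by simp
  then show False using lt by simp
qed


lemma linf_le:
  assumes "r \<ge> 0"
  shows "linf_dist d a b \<le> r \<longleftrightarrow> (\<forall>j<d. \<bar>a j - b j\<bar> \<le> r)"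
proof -
  have fin: "finite ({\<bar>a j - b j\<bar> | j. j < d} \<union> {0})" by simp
  show ?thesis unfolding linf_dist_def using assms
    by (subst Max_le_iff[OF fin]) auto
qed

lemma linf_ge: "j < d \<Longrightarrow> \<bar>a j - b j\<bar> \<le> linf_dist d a b"
  unfolding linf_dist_def by (rule Max_ge) auto

lemma linf_nonneg: "0 \<le> linf_dist d a b"
  unfolding linf_dist_def by (rule Max_ge) auto

definition ibox :: "nat \<Rightarrow> (nat \<Rightarrow> int) \<Rightarrow> (nat \<Rightarrow> int) \<Rightarrow> (nat \<Rightarrow> int) set" where
  "ibox d lo hi = {z \<in> Zvec d. \<forall>j<d. lo j \<le> z j \<and> z j \<le> hi j}"

lemma ibox_rconn: "r_connected (linf_dist d) 1 (ibox d lo hi)"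
  unfolding r_connected_def
proof (intro ballI)
  fix x y assume x: "x \<in> ibox d lo hi" and y: "y \<in> ibox d lo hi"
  define D where "D = nat (linf_dist d x y)"
  define p where "p t = (\<lambda>j. if j < d then x j + sgn (y j - x j) * min (int t) \<bar>y j - x j\<bar> else 0)" for t :: nat
  define ps where "ps = map p [0..<Suc D]"
  have x0: "x j = 0" if "j \<ge> d" for j using x that by (auto simp: ibox_def Zvec_def)
  have y0: "y j = 0" if "j \<ge> d" for j using y that by (auto simp: ibox_def Zvec_def)
  have le: "\<bar>y j - x j\<bar> \<le> int D" if "j < d" for j
    using linf_ge[OF that, of x y] linf_nonneg[of d x y] by (simp add: D_def abs_minus_commute)
  have "ps \<noteq> []" by (simp add: ps_def)
  moreover have "hd ps = x"
  proof -
    have "hd ps = p 0" by (simp add: ps_def upt_conv_Cons del: upt_Suc)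
    also have "p 0 = x" by (auto simp: p_def x0)
    finally show ?thesis .
  qed
  moreover have "last ps = y"
  proof -
    have "last ps = p D" by (simp add: ps_def last_map del: upt_Suc)
    also have "\<dots> = y"
    proof
      fix j show "p D j = y j"
      proof (cases "j < d")
        case True
        then have "min (int D) \<bar>y j - x j\<bar> = \<bar>y j - x j\<bar>" using le by simp
        then show ?thesis using True by (simp add: p_def sgn_mult_abs)
      qed (simp add: p_def y0)
    qed
    finally show ?thesis .
  qed
  moreover have "set ps \<subseteq> ibox d lo hi"
  proof
    fix z assume "z \<in> set ps"
    then obtain t where z: "z = p t" by (auto simp: ps_def)
    have "lo j \<le> z j \<and> z j \<le> hi j" if "j < d" for j
    proof -
      have b: "lo j \<le> x j" "x j \<le> hi j" "lo j \<le> y j" "y j \<le> hi j"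
        using x y that by (auto simp: ibox_def)
      have m: "0 \<le> min (int t) \<bar>y j - x j\<bar>" "min (int t) \<bar>y j - x j\<bar> \<le> \<bar>y j - x j\<bar>" by auto
      show ?thesis
      proof (cases "y j - x j" "0::int" rule: linorder_cases)
        case less then show ?thesis using b m that by (auto simp: z p_def min_def)
      next
        case equal then show ?thesis using b m that by (auto simp: z p_def min_def)
      next
        case greater then show ?thesis using b m that by (auto simp: z p_def min_def)
      qed
    qed
    moreover have "z \<in> Zvec d" by (simp add: z p_def Zvec_def)
    ultimately show "z \<in> ibox d lo hi" by (simp add: ibox_def)
  qed
  moreover have "linf_dist d (ps ! j) (ps ! Suc j) \<le> 1" if "Suc j < length ps" for j
  proof -
    have pj: "ps ! j = p j" "ps ! Suc j = p (Suc j)" using that by (auto simp: ps_def nth_map simp del: upt_Suc)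
    have "\<bar>p j l - p (Suc j) l\<bar> \<le> 1" if "l < d" for l
    proof -
      have "\<bar>min (int j) \<bar>y l - x l\<bar> - min (int (Suc j)) \<bar>y l - x l\<bar>\<bar> \<le> 1" by auto
      then show ?thesis using that
        by (cases "y l - x l" "0::int" rule: linorder_cases) (auto simp: p_def)
    qed
    then show ?thesis unfolding pj by (subst linf_le) auto
  qed
  ultimately show "\<exists>ps. ps \<noteq> [] \<and> hd ps = x \<and> last ps = y \<and> set ps \<subseteq> ibox d lo hi \<and>
        (\<forall>j. Suc j < length ps \<longrightarrow> linf_dist d (ps ! j) (ps ! Suc j) \<le> 1)" by blast
qed

lemma ibox_card:
  assumes "\<And>j. j < d \<Longrightarrow> hi j - lo j < int N"
  shows "finite (ibox d lo hi) \<and> card (ibox d lo hi) \<le> N ^ d"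
proof -
  define g where "g f = (\<lambda>j. if j < d then lo j + int (f j) else 0)" for f :: "nat \<Rightarrow> nat"
  define A where "A = PiE {..<d} (\<lambda>_::nat. {..<N})"
  have sub: "ibox d lo hi \<subseteq> g ` A"
  proof
    fix z assume z: "z \<in> ibox d lo hi"
    define f where "f j = (if j < d then nat (z j - lo j) else undefined)" for j
    have "f \<in> A"
      using z assms by (fastforce simp: A_def f_def ibox_def PiE_def extensional_def)
    moreover have "z = g f"
    proof
      fix j show "z j = g f j" using z by (auto simp: g_def f_def ibox_def Zvec_def)
    qed
    ultimately show "z \<in> g ` A" by blast
  qed
  have fin: "finite A" by (simp add: A_def finite_PiE)
  have "card (g ` A) \<le> card A" using fin card_image_le by blast
  also have "\<dots> = N ^ d" by (simp add: A_def card_PiE)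
  finally have c: "card (g ` A) \<le> N ^ d" .
  have "finite (g ` A)" using fin by simp
  then show ?thesis using sub c card_mono finite_subset order.trans by metis
qed

lemma adj_idx:
  assumes k: "k \<ge> 1" and x: "(x::real^'n) \<in> grid_cube k i" "x \<in> grid_cube k j"
  shows "i s \<le> j s + 1"
proof -
  have kp: "real k > 0" using k by simp
  have "(real (i s) - 1) / real k \<le> x$s" "x$s \<le> real (j s) / real k"
    using x by (auto simp: grid_cube_def)
  then have "(real (i s) - 1) / real k \<le> real (j s) / real k" by linarith
  then have "real (i s) - 1 \<le> real (j s)" using kp by (simp add: divide_right_mono_neg divide_le_cancel)
  then show ?thesis by linarith
qed

lemma facet_aff_dim:
  assumes k: "k \<ge> 1" and ij: "\<And>t. t \<noteq> s \<Longrightarrow> i t = j t" "j s = i s + 1"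
  shows "int CARD('n) - 1 \<le> aff_dim ((grid_cube k i :: (real^'n) set) \<inter> grid_cube k j)"
proof -
  have kp: "real k > 0" using k by simp
  define H where "H = {x::real^'n. axis s 1 \<bullet> x = real (i s) / real k}"
  define U where "U = (\<Inter>t\<in>-{s}. {x::real^'n. (real (i t) - 1) / real k < x$t} \<inter> {x. x$t < real (i t) / real k})"
  define Op where "Op = H \<inter> U"
  have openU: "open U" unfolding U_def
    by (intro open_INT ballI open_Int open_halfspace_component_gt_cart open_halfspace_component_lt_cart) simp
  have ope: "openin (top_of_set H) Op" unfolding Op_def using openU by (simp add: openin_open_Int)
  have affH: "affine H" unfolding H_def by (rule affine_hyperplane)
  define x0 :: "real^'n" where "x0 = (\<chi> t. if t = s then real (i s) / real k else (real (i t) - 1/2) / real k)"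
  have "x0 \<in> Op"
    using kp by (auto simp: Op_def H_def U_def x0_def inner_axis' divide_strict_right_mono)
  then have neO: "Op \<noteq> {}" by auto
  have "aff_dim Op = aff_dim H" using aff_dim_openin[OF ope affH neO] .
  also have "aff_dim H = int CARD('n) - 1" unfolding H_def
    by (subst aff_dim_hyperplane) (auto simp: axis_eq_0_iff)
  finally have e: "aff_dim Op = int CARD('n) - 1" .
  have "Op \<subseteq> grid_cube k i \<inter> grid_cube k j"
  proof
    fix x assume x: "x \<in> Op"
    have xs: "x$s = real (i s) / real k" using x by (auto simp: Op_def H_def inner_axis')
    have xt: "(real (i t) - 1) / real k < x$t \<and> x$t < real (i t) / real k" if "t \<noteq> s" for t
      using x that by (auto simp: Op_def U_def)
    have "x \<in> grid_cube k i"
      unfolding grid_cube_def mem_Collect_eq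
    proof
      fix t show "(real (i t) - 1) / real k \<le> x $ t \<and> x $ t \<le> real (i t) / real k"
      proof (cases "t = s")
        case True
        have "(real (i s) - 1) / real k \<le> real (i s) / real k" using kp by (simp add: divide_right_mono)
        then show ?thesis using True xs by simp
      next
        case False then show ?thesis using xt[OF False] by linarith
      qed
    qed
    moreover have "x \<in> grid_cube k j"
      unfolding grid_cube_def mem_Collect_eq
    proof
      fix t show "(real (j t) - 1) / real k \<le> x $ t \<and> x $ t \<le> real (j t) / real k"
      proof (cases "t = s")
        case True
        have "real (i s) / real k \<le> (real (i s) + 1) / real k" using kp by (simp add: divide_right_mono)
        then show ?thesis using True xs ij(2) by (simp add: add.commute)
      next
        case False then show ?thesis using xt[OF False] ij(1)[OF False] by simp
      qed
    qed
    ultimately show "x \<in> grid_cube k i \<inter> grid_cube k j" by blast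
  qed
  then have "aff_dim Op \<le> aff_dim (grid_cube k i \<inter> grid_cube k j)" by (rule aff_dim_subset)
  then show ?thesis using e by simp
qed

lemma grid_cube_in: "i \<in> Idx k \<Longrightarrow> grid_cube k i \<in> grid_cubes k"
  by (auto simp: grid_cubes_def Idx_def)

lemma connected_grid_cube: "connected (grid_cube k i :: (real^'n) set)"
  by (simp add: grid_cube_cbox convex_connected convex_box(1))

definition badc :: "nat \<Rightarrow> nat \<Rightarrow> int \<Rightarrow> bool" where
  "badc n p v \<longleftrightarrow> (v + int n - int p * (2*int n+1)) mod (int n * (2*int n+1)) < 2*int n"

lemma badc_unique:
  assumes "p < n" "q < n" "badc n p v" "badc n q v"
  shows "p = q"
proof (rule ccontr)
  assume "p \<noteq> q"
  then consider "p < q" | "q < p" by linarith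
  then show False
  proof cases
    case 1 then show False using two_bad[of p q n "v + int n"] assms unfolding badc_def by auto
  next
    case 2 then show False using two_bad[of q p n "v + int n"] assms unfolding badc_def by auto
  qed
qed

lemma exists_good:
  fixes h :: "'n::finite \<Rightarrow> nat" and y :: "nat \<Rightarrow> int"
  assumes bij: "bij_betw h UNIV {0..<CARD('n)}"
  shows "\<exists>c. \<forall>j<CARD('n) - 1. \<not> badc CARD('n) (h c) (y j)"
proof (rule ccontr)
  assume neg: "\<not> ?thesis"
  define n where "n = CARD('n)"
  define B where "B j = {c. badc n (h c) (y j)}" for j
  have inj: "inj h" using bij bij_betw_def by blast
  have hlt: "h c < n" for c using bij unfolding n_def bij_betw_def by auto
  have cB: "card (B j) \<le> 1" for j
  proof -
    have "\<forall>a1\<in>B j. \<forall>a2\<in>B j. a1 = a2"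
      using badc_unique[OF hlt hlt] inj unfolding B_def by (auto simp: inj_def)
    then show ?thesis using card_le_Suc0_iff_eq[of "B j"] by simp
  qed
  have "UNIV \<subseteq> (\<Union>j<n - 1. B j)" using neg unfolding B_def n_def by auto
  then have "card (UNIV :: 'n set) \<le> card (\<Union>j<n - 1. B j)" by (intro card_mono) auto
  also have "\<dots> \<le> (\<Sum>j<n - 1. card (B j))" by (rule card_UN_le) simp
  also have "\<dots> \<le> (\<Sum>j<n - 1. 1)" using cB by (intro sum_mono) auto
  also have "\<dots> = n - 1" by simp
  finally have a: "CARD('n) \<le> n - 1" .
  have "CARD('n) \<ge> 1" using card_gt_0_iff[of "UNIV::'n set"] by auto
  then show False using a unfolding n_def by linarith
qed

lemma div_box:
  fixes z s M :: int
  assumes "M > 0" "(z - s) div M = q"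
  shows "q * M + s \<le> z \<and> z \<le> q * M + s + M - 1"
proof -
  have "z - s = q * M + (z - s) mod M" unfolding assms(2)[symmetric] by simp
  moreover have "0 \<le> (z - s) mod M" "(z - s) mod M < M" using assms by auto
  ultimately show ?thesis by linarith
qed

lemma dist_adj:
  fixes F :: "(real^'n::finite) set \<Rightarrow> (nat \<Rightarrow> int)" and m :: int and h :: "'n \<Rightarrow> nat"
  assumes k: "k \<ge> 1" and mle: "m \<le> int CARD('n) - 1"
    and hyp: "\<forall>K1\<in>grid_cubes k. \<forall>K2\<in>grid_cubes k. aff_dim (K1 \<inter> K2) \<ge> m \<longrightarrow> linf_dist d (F K1) (F K2) \<le> 1"
    and a: "a \<in> Idx k" and b: "b \<in> Idx k" and ab: "\<And>t. a t \<le> b t + 1 \<and> b t \<le> a t + 1"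
    and h: "bij_betw h UNIV {0..<CARD('n)}"
    and l: "l < d"
  shows "\<bar>F (grid_cube k a) l - F (grid_cube k b) l\<bar> \<le> int CARD('n)"
proof -
  define it where "it t = (\<lambda>s. if h s < t then b s else a s)" for t
  define G where "G x = F (grid_cube k x)" for x
  have inj: "inj h" using h bij_betw_def by blast
  have itI: "it t \<in> Idx k" for t using a b by (auto simp: it_def Idx_def)
  have step: "\<bar>G (it t) l - G (it (Suc t)) l\<bar> \<le> 1" for t
  proof (cases "\<exists>s. h s = t \<and> a s \<noteq> b s")
    case True
    then obtain s where s: "h s = t" "a s \<noteq> b s" by blast
    have oth: "it t s' = it (Suc t) s'" if "s' \<noteq> s" for s'
    proof -
      have "h s' \<noteq> t" using inj s(1) that by (auto simp: inj_def)
      then show ?thesis by (auto simp: it_def)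
    qed
    have at: "it t s = a s" "it (Suc t) s = b s" using s by (auto simp: it_def)
    have "int CARD('n) - 1 \<le> aff_dim ((grid_cube k (it t) :: (real^'n) set) \<inter> grid_cube k (it (Suc t)))"
    proof (cases "b s = a s + 1")
      case True
      then show ?thesis using facet_aff_dim[OF k, of s "it t" "it (Suc t)"] oth at by auto
    next
      case False
      then have "a s = b s + 1" using ab[of s] s(2) by linarith
      then show ?thesis using facet_aff_dim[OF k, of s "it (Suc t)" "it t"] oth at
        by (auto simp: Int_commute)
    qed
    then have "linf_dist d (G (it t)) (G (it (Suc t))) \<le> 1"
      using hyp grid_cube_in[OF itI] mle unfolding G_def by fastforce
    then show ?thesis using linf_ge[OF l] order.trans by blast
  next
    case False
    then have "it t = it (Suc t)" by (auto simp: it_def)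
    then show ?thesis by simp
  qed
  have ind: "\<bar>G a l - G (it t) l\<bar> \<le> int t" for t
  proof (induction t)
    case 0
    have "it 0 = a" by (auto simp: it_def)
    then show ?case by simp
  next
    case (Suc t)
    then show ?case using step[of t] by linarith
  qed
  have "it CARD('n) = b"
  proof
    fix s have "h s < CARD('n)" using h unfolding bij_betw_def by auto
    then show "it CARD('n) s = b s" by (simp add: it_def)
  qed
  then show ?thesis using ind[of "CARD('n)"] unfolding G_def by simp
qed

theorem theoremA:
  fixes m :: int
  assumes "0 \<le> m" and "m \<le> int CARD('n) - 1"
  shows "\<exists>C::real. C > 0 \<and>
    (\<forall>(k::nat) (F :: (real^'n::finite) set \<Rightarrow> (nat \<Rightarrow> int)).
       k \<ge> 1 \<longrightarrow>
       (\<forall>K\<in>grid_cubes k. F K \<in> Zvec (CARD('n) - 1)) \<longrightarrow>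
       (\<forall>K1\<in>grid_cubes k. \<forall>K2\<in>grid_cubes k.
          aff_dim (K1 \<inter> K2) \<ge> m \<longrightarrow> linf_dist (CARD('n) - 1) (F K1) (F K2) \<le> 1) \<longrightarrow>
       (\<exists>P S. P \<subseteq> Zvec (CARD('n) - 1) \<and> r_connected (linf_dist (CARD('n) - 1)) 1 P \<and>
          finite P \<and> real (card P) \<le> C \<and>
          S \<subseteq> {K \<in> grid_cubes k. F K \<in> P} \<and>
          connects_opposite_faces (\<Union>S)))"
proof -
  note mle = assms(2)
  obtain h :: "'n \<Rightarrow> nat" where h: "bij_betw h UNIV {0..<CARD('n)}"
    using ex_bij_betw_finite_nat[of "UNIV::'n set"] by auto
  define L :: int where "L = 2*int CARD('n)+1"
  define M :: int where "M = int CARD('n) * L"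
  define sh where "sh c = int (h c) * L" for c
  define good where "good c y = (\<forall>j<CARD('n) - 1. \<not> badc CARD('n) (h c) (y j))" for c y
  define col where "col y = (SOME c. good c y)" for y
  have gcol: "good (col y) y" for y
  proof -
    have "\<exists>c. good c y" using exists_good[OF h, of y] unfolding good_def .
    then show ?thesis unfolding col_def by (rule someI_ex)
  qed
  have n1: "CARD('n) \<ge> 1" using card_gt_0_iff[of "UNIV::'n set"] by auto
  have Mpos: "M > 0" using n1 by (simp add: M_def L_def)
  have M2: "2 * int CARD('n) < M"
  proof -
    have "2 * int CARD('n) < int CARD('n) * 3" using n1 by simp
    also have "\<dots> \<le> int CARD('n) * L" using n1 by (intro mult_left_mono) (auto simp: L_def)
    finally show ?thesis by (simp add: M_def)
  qed
  show ?thesis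
  proof (intro exI[of _ "real (nat M ^ (CARD('n) - 1))"] conjI allI impI)
    show "real (nat M ^ (CARD('n) - 1)) > 0" using Mpos by simp
    fix k :: nat and F :: "(real^'n) set \<Rightarrow> (nat \<Rightarrow> int)"
    assume k: "k \<ge> 1" and FZ: "\<forall>K\<in>grid_cubes k. F K \<in> Zvec (CARD('n) - 1)"
      and hyp: "\<forall>K1\<in>grid_cubes k. \<forall>K2\<in>grid_cubes k.
          aff_dim (K1 \<inter> K2) \<ge> m \<longrightarrow> linf_dist (CARD('n) - 1) (F K1) (F K2) \<le> 1"
    define G where "G i = F (grid_cube k i)" for i
    define col' where "col' i = col (G i)" for i
    obtain c i0 i1 where hx: "i0 \<in> Idx k" "col' i0 = c" "(grid_cube k i0 :: (real^'n) set) \<inter> face_minus c \<noteq> {}"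
      "(i0, i1) \<in> (Rel k col' c)\<^sup>*" "(grid_cube k i1 :: (real^'n) set) \<inter> face_plus c \<noteq> {}"
      using hex[OF k, of col'] by (elim exE conjE) blast
    define lo where "lo l = (G i0 l - sh c) div M * M + sh c" for l
    define hi where "hi l = lo l + M - 1" for l
    define P where "P = ibox (CARD('n) - 1) lo hi"
    have Pin: "G j \<in> P" if j: "j \<in> Idx k" and dv: "\<forall>l<CARD('n)-1. (G j l - sh c) div M = (G i0 l - sh c) div M" for j
    proof -
      have "G j \<in> Zvec (CARD('n) - 1)" using FZ grid_cube_in[OF j] unfolding G_def by blast
      moreover have "lo l \<le> G j l \<and> G j l \<le> hi l" if "l < CARD('n) - 1" for l
        using div_box[OF Mpos dv[rule_format, OF that]] unfolding lo_def hi_def by simp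
      ultimately show ?thesis unfolding P_def ibox_def by blast
    qed
    have inv: "\<exists>S. S \<subseteq> {K \<in> grid_cubes k. F K \<in> P} \<and> connected (\<Union>S) \<and> grid_cube k i0 \<subseteq> \<Union>S
        \<and> grid_cube k j \<subseteq> \<Union>S \<and> j \<in> Idx k \<and> col' j = c \<and>
        (\<forall>l<CARD('n)-1. (G j l - sh c) div M = (G i0 l - sh c) div M)"
      if "(i0, j) \<in> (Rel k col' c)\<^sup>*" for j
      using that
    proof (induction rule: rtrancl_induct)
      case base
      have "G i0 \<in> P" using Pin[OF hx(1)] by simp
      then have "{grid_cube k i0} \<subseteq> {K \<in> grid_cubes k. F K \<in> P}"
        using grid_cube_in[OF hx(1)] unfolding G_def by auto
      moreover have "connected (\<Union>{grid_cube k i0 :: (real^'n) set})" using connected_grid_cube by simp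
      ultimately show ?case using hx(1,2) by (intro exI[of _ "{grid_cube k i0}"]) simp
    next
      case (step j j')
      obtain S where S: "S \<subseteq> {K \<in> grid_cubes k. F K \<in> P}" "connected (\<Union>S)" "grid_cube k i0 \<subseteq> \<Union>S"
        "grid_cube k j \<subseteq> \<Union>S" "j \<in> Idx k" "col' j = c"
        "\<forall>l<CARD('n)-1. (G j l - sh c) div M = (G i0 l - sh c) div M"
        using step.IH by blast
      have jj: "j' \<in> Idx k" "col' j' = c" "(grid_cube k j :: (real^'n) set) \<inter> grid_cube k j' \<noteq> {}"
        using step.hyps(2) unfolding Rel_def by auto
      obtain x where x: "(x::real^'n) \<in> grid_cube k j" "x \<in> grid_cube k j'" using jj(3) by blast
      have adj: "j t \<le> j' t + 1 \<and> j' t \<le> j t + 1" for t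
        using adj_idx[OF k x(1) x(2)] adj_idx[OF k x(2) x(1)] by blast
      have gj: "good c (G j)" using gcol[of "G j"] S(6) unfolding col'_def by simp
      have eqd: "(G j' l - sh c) div M = (G i0 l - sh c) div M" if l: "l < CARD('n) - 1" for l
      proof -
        have dl: "\<bar>G j l - G j' l\<bar> \<le> int CARD('n)"
          using dist_adj[OF k mle hyp S(5) jj(1) adj h l] unfolding G_def .
        have nb: "\<not> badc CARD('n) (h c) (G j l)" using gj l unfolding good_def by blast
        have e: "G j l - sh c + int CARD('n) = G j l + int CARD('n) - int (h c) * (2 * int CARD('n) + 1)"
          by (simp add: sh_def L_def)
        have "2 * int CARD('n) \<le> (G j l - sh c + int CARD('n)) mod M"
          using nb unfolding badc_def e M_def L_def by simp
        then have "(G j' l - sh c) div M = (G j l - sh c) div M"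
          using div_stable[where M=M and n="int CARD('n)" and v="G j l - sh c" and w="G j' l - sh c"] Mpos M2 n1 dl
          by (simp add: abs_minus_commute)
        then show ?thesis using S(7) l by simp
      qed
      have "G j' \<in> P" using Pin[OF jj(1)] eqd by blast
      then have sub: "insert (grid_cube k j') S \<subseteq> {K \<in> grid_cubes k. F K \<in> P}"
        using S(1) grid_cube_in[OF jj(1)] unfolding G_def by auto
      have "connected (grid_cube k j' \<union> \<Union>S)"
        using connected_Un[OF connected_grid_cube S(2)] x S(4) by blast
      then have "connected (\<Union>(insert (grid_cube k j') S))" by simp
      moreover have "grid_cube k i0 \<subseteq> \<Union>(insert (grid_cube k j') S)" using S(3) by auto
      moreover have "grid_cube k j' \<subseteq> \<Union>(insert (grid_cube k j') S)" by auto
      ultimately show ?case using sub jj(1,2) eqd by (intro exI[of _ "insert (grid_cube k j') S"] conjI) auto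
    qed
    obtain S where S: "S \<subseteq> {K \<in> grid_cubes k. F K \<in> P}" "connected (\<Union>S)" "grid_cube k i0 \<subseteq> \<Union>S"
        "grid_cube k i1 \<subseteq> \<Union>S"
      using inv[OF hx(4)] by blast
    have PZ: "P \<subseteq> Zvec (CARD('n) - 1)" unfolding P_def ibox_def by auto
    have Pr: "r_connected (linf_dist (CARD('n) - 1)) 1 P" unfolding P_def by (rule ibox_rconn)
    have Pc: "finite P \<and> card P \<le> nat M ^ (CARD('n) - 1)" unfolding P_def
      by (rule ibox_card) (simp add: hi_def lo_def Mpos)
    have conn: "connects_opposite_faces (\<Union>S)"
    proof -
      have "\<Union>S \<inter> face_minus c \<noteq> {}" using S(3) hx(3) by auto
      moreover have "\<Union>S \<inter> face_plus c \<noteq> {}" using S(4) hx(5) by auto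
      ultimately show ?thesis unfolding connects_opposite_faces_def using S(2) by (intro exI[of _ c]) simp
    qed
    show "\<exists>P S. P \<subseteq> Zvec (CARD('n) - 1) \<and> r_connected (linf_dist (CARD('n) - 1)) 1 P \<and>
          finite P \<and> real (card P) \<le> real (nat M ^ (CARD('n) - 1)) \<and>
          S \<subseteq> {K \<in> grid_cubes k. F K \<in> P} \<and>
          connects_opposite_faces (\<Union>S)"
    proof -
      have "real (card P) \<le> real (nat M ^ (CARD('n) - 1))" using Pc by linarith
      then show ?thesis using PZ Pr Pc S(1) conn by (intro exI[of _ P] exI[of _ S] conjI) simp_all
    qed
  qed
qed

end
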